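(* Consider the flat FLRW spacetime $M=I\times\mathbb{R}^3$ ($I\subset\mathbb{R}$ an open interval), $g=-(\mathrm{d}x^0)^2+a(x^0)^2\delta_{ij}\mathrm{d}x^i\mathrm{d}x^j$ with smooth $a>0$, and $m,\sigma>0$. In global bundle coordinates $(x^0,x^i,v^i)$ on $U^mM$ (with $v^0=\sqrt{m^2+a^2|v|^2}$, $|v|=\sqrt{\delta_{ij}v^iv^j}$), a smooth function $f$ on $U^mM$ is invariant under the complete lifts of all Killing fields $\partial_{x^i}$ and $x^i\partial_{x^j}-x^j\partial_{x^i}$ (i.e. annihilated by $\partial_{x^i}$ and by $x^i\partial_{x^j}-x^j\partial_{x^i}+v^i\partial_{v^j}-v^j\partial_{v^i}$) if and only if $f(x^0,x,v)=F(x^0,p)$ for some function $F$, where $p=a(x^0)^2|v|$. For such $f$, the Fokker–Planck equation $\big(L_m-\frac{\sigma^2}{2}\Delta^{\mathrm{ver}}_m\big)f=0$ is equivalent (for $p>0$) to \[ \frac{\sqrt{m^2a^2+p^2}}{a}\,\frac{\partial F}{\partial x^0}=\frac{\sigma^2}{2}\Big(\Big(a^2+\frac{p^2}{m^2}\Big)\frac{\partial^2F}{\partial p^2}+\Big(\frac{2a^2}{p}+\frac{3p}{m^2}\Big)\frac{\partial F}{\partial p}\Big), \] and if $F$ is such a solution with enough decay in $p$ (so that the integrals converge, may be differentiated under the integral sign, and integration by parts produces no boundary terms), then the particle current density has $\mathsf J^i=0$ and \[ a(x^0)^3\,\mathsf J^0(x^0)=4\pi\int_0^\infty p^2F(x^0,p)\,\mathrm{d}p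 \] is independent of $x^0$.
   Context: On $U^mM=\{v\in TM:g(v,v)=-m^2,\ v\text{ future-directed}\}$ for this metric, with coordinates $(x^0,x^i,v^i)$, $i=1,2,3$: the geodesic spray is $L_m=v^0\big(\partial_{x^0}-2\frac{a'}{a}v^i\partial_{v^i}\big)+v^i\partial_{x^i}$ and the vertical Laplacian (fibrewise Laplace–Beltrami operator of the hyperboloids $U^m_xM$ with the metric induced by $g_x$) is $\Delta^{\mathrm{ver}}_m=\big(\frac{\delta^{ij}}{a^2}+\frac{v^iv^j}{m^2}\big)\partial_{v^i}\partial_{v^j}+\frac{3v^i}{m^2}\partial_{v^i}$. The fibre volume form is $\sigma^m_x=m\frac{a^3}{v^0}\mathrm{d}v^1\wedge\mathrm{d}v^2\wedge\mathrm{d}v^3$, and the particle current density is $\mathsf J^\mu(x)=m^{-1}\int_{U^m_xM}v^\mu f\,\sigma^m_x$, so that $\mathsf J^0=a^3\int_{\mathbb{R}^3}f\,\mathrm{d}^3v$. *)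

theory Defs
  imports "HOL-Analysis.Analysis"
begin

text \<open>Points of the unit-mass shell bundle in global coordinates (x0, x, v),
  x0 real, x and v in R^3.\<close>
type_synonym pt = "real \<times> (real^3) \<times> (real^3)"

definition dirD :: "('a::real_normed_vector \<Rightarrow> real) \<Rightarrow> 'a \<Rightarrow> 'a \<Rightarrow> real" where
  "dirD g z e = deriv (\<lambda>s. g (z + s *\<^sub>R e)) 0"

fun Ck :: "nat \<Rightarrow> 'a::euclidean_space set \<Rightarrow> ('a \<Rightarrow> real) \<Rightarrow> bool" where
  "Ck 0 S g = continuous_on S g"
| "Ck (Suc k) S g = ((\<forall>z\<in>S. g differentiable (at z)) \<and> (\<forall>e\<in>Basis. Ck k S (\<lambda>z. dirD g z e)))"

definition Cinf_on :: "'a::euclidean_space set \<Rightarrow> ('a \<Rightarrow> real) \<Rightarrow> bool" where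
  "Cinf_on S g = (\<forall>k. Ck k S g)"

definition e_t :: pt where "e_t = (1, 0, 0)"
definition e_x :: "3 \<Rightarrow> pt" where "e_x i = (0, axis i 1, 0)"
definition e_v :: "3 \<Rightarrow> pt" where "e_v i = (0, 0, axis i 1)"

definition UmM :: "real set \<Rightarrow> pt set" where
  "UmM I = {z. fst z \<in> I}"

definition vzero :: "(real \<Rightarrow> real) \<Rightarrow> real \<Rightarrow> real \<Rightarrow> real^3 \<Rightarrow> real" where
  "vzero a m t v = sqrt (m^2 + (a t)^2 * (norm v)^2)"

definition pmom :: "(real \<Rightarrow> real) \<Rightarrow> real \<Rightarrow> real^3 \<Rightarrow> real" where
  "pmom a t v = (a t)^2 * norm v"

definition invariant :: "real set \<Rightarrow> (pt \<Rightarrow> real) \<Rightarrow> bool" where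
  "invariant I f = (\<forall>z\<in>UmM I.
      (\<forall>i. dirD f z (e_x i) = 0) \<and>
      (\<forall>i j. (fst (snd z))$i * dirD f z (e_x j) - (fst (snd z))$j * dirD f z (e_x i)
             + (snd (snd z))$i * dirD f z (e_v j) - (snd (snd z))$j * dirD f z (e_v i) = 0))"

definition spray :: "(real \<Rightarrow> real) \<Rightarrow> real \<Rightarrow> (pt \<Rightarrow> real) \<Rightarrow> pt \<Rightarrow> real" where
  "spray a m f z = (let t = fst z; v = snd (snd z) in
     vzero a m t v * (dirD f z e_t - 2 * (deriv a t / a t) * (\<Sum>i\<in>UNIV. v$i * dirD f z (e_v i)))
     + (\<Sum>i\<in>UNIV. v$i * dirD f z (e_x i)))"

definition vlap :: "(real \<Rightarrow> real) \<Rightarrow> real \<Rightarrow> (pt \<Rightarrow> real) \<Rightarrow> pt \<Rightarrow> real" where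
  "vlap a m f z = (let t = fst z; v = snd (snd z) in
     (\<Sum>i\<in>UNIV. \<Sum>j\<in>UNIV. ((if i = j then 1 else 0) / (a t)^2 + v$i * v$j / m^2)
          * dirD (\<lambda>w. dirD f w (e_v j)) z (e_v i))
     + (\<Sum>i\<in>UNIV. 3 * v$i / m^2 * dirD f z (e_v i)))"

definition FP :: "(real \<Rightarrow> real) \<Rightarrow> real \<Rightarrow> real \<Rightarrow> (pt \<Rightarrow> real) \<Rightarrow> pt \<Rightarrow> real" where
  "FP a m \<sigma> f z = spray a m f z - \<sigma>^2 / 2 * vlap a m f z"

definition dt :: "(real \<Rightarrow> real \<Rightarrow> real) \<Rightarrow> real \<Rightarrow> real \<Rightarrow> real" where
  "dt F t p = deriv (\<lambda>s. F s p) t"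
definition dp :: "(real \<Rightarrow> real \<Rightarrow> real) \<Rightarrow> real \<Rightarrow> real \<Rightarrow> real" where
  "dp F t p = deriv (\<lambda>q. F t q) p"
definition dpp :: "(real \<Rightarrow> real \<Rightarrow> real) \<Rightarrow> real \<Rightarrow> real \<Rightarrow> real" where
  "dpp F t p = deriv (\<lambda>q. dp F t q) p"

definition FPred :: "(real \<Rightarrow> real) \<Rightarrow> real \<Rightarrow> real \<Rightarrow> (real \<Rightarrow> real \<Rightarrow> real) \<Rightarrow> real \<Rightarrow> real \<Rightarrow> bool" where
  "FPred a m \<sigma> F t p \<longleftrightarrow>
     sqrt (m^2 * (a t)^2 + p^2) / a t * dt F t p
     = \<sigma>^2 / 2 * (((a t)^2 + p^2 / m^2) * dpp F t p + (2 * (a t)^2 / p + 3 * p / m^2) * dp F t p)"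

text \<open>Particle current density J^mu(x) = m^-1 int v^mu f sigma^m_x,
  sigma^m_x = m a^3 / v^0 d^3v.  Spatial components and time component.\<close>
definition Jsp :: "(real \<Rightarrow> real) \<Rightarrow> real \<Rightarrow> (pt \<Rightarrow> real) \<Rightarrow> 3 \<Rightarrow> real \<Rightarrow> real^3 \<Rightarrow> real" where
  "Jsp a m f i t x = (1 / m) * integral\<^sup>L lborel
      (\<lambda>v::real^3. v$i * f (t, x, v) * (m * (a t)^3 / vzero a m t v))"

definition J0 :: "(real \<Rightarrow> real) \<Rightarrow> real \<Rightarrow> (pt \<Rightarrow> real) \<Rightarrow> real \<Rightarrow> real^3 \<Rightarrow> real" where
  "J0 a m f t x = (1 / m) * integral\<^sup>L lborel
      (\<lambda>v::real^3. vzero a m t v * f (t, x, v) * (m * (a t)^3 / vzero a m t v))"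

end

theory Submission
  imports Defs
begin


lemma Basis_e: "e_t \<in> Basis" "e_x i \<in> Basis" "e_v i \<in> Basis"
proof -
  have a: "axis i (1::real) \<in> Basis" by (auto simp: Basis_vec_def)
  show "e_t \<in> Basis" unfolding e_t_def Basis_prod_def by (force simp: zero_prod_def)
  show "e_x i \<in> Basis" unfolding e_x_def Basis_prod_def using a by (force simp: zero_prod_def)
  show "e_v i \<in> Basis" unfolding e_v_def Basis_prod_def using a by (force simp: zero_prod_def)
qed

lemma Cinf_dir: "Cinf_on S g \<Longrightarrow> e \<in> Basis \<Longrightarrow> Cinf_on S (\<lambda>z. dirD g z e)"
  unfolding Cinf_on_def by (metis Ck.simps(2))

lemma Cinf_diff: "Cinf_on S g \<Longrightarrow> z \<in> S \<Longrightarrow> g differentiable (at z)"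
  unfolding Cinf_on_def by (metis Ck.simps(2) One_nat_def)

lemma Cinf_cont: "Cinf_on S g \<Longrightarrow> continuous_on S g"
  unfolding Cinf_on_def by (metis Ck.simps(1))

lemma dirD_eq:
  assumes "(g has_derivative g') (at z)"
  shows "dirD g z e = g' e"
proof -
  have l: "linear g'" using assms has_derivative_linear by blast
  have "((\<lambda>s. z + s *\<^sub>R e) has_derivative (\<lambda>s. s *\<^sub>R e)) (at 0)"
    by (auto intro!: derivative_eq_intros)
  hence "((\<lambda>s. g (z + s *\<^sub>R e)) has_derivative (\<lambda>s. g' (s *\<^sub>R e))) (at 0)"
    using has_derivative_compose[of "\<lambda>s. z + s *\<^sub>R e" _ 0 UNIV g g'] assms by simp
  moreover have "\<And>s. g' (s *\<^sub>R e) = g' e * s" using l by (simp add: linear_scale)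
  ultimately have "((\<lambda>s. g (z + s *\<^sub>R e)) has_derivative (\<lambda>s. g' e * s)) (at 0)"
    by simp
  hence "((\<lambda>s. g (z + s *\<^sub>R e)) has_real_derivative g' e) (at 0)"
    by (simp add: has_field_derivative_def)
  thus ?thesis unfolding dirD_def by (rule DERIV_imp_deriv)
qed

lemma vec3_expand: "(x::real^3) = x$1 *\<^sub>R axis 1 1 + x$2 *\<^sub>R axis 2 1 + x$3 *\<^sub>R axis 3 1"
  by (simp add: vec_eq_iff forall_3 axis_def)

lemma pt_expand: "(d::pt) = fst d *\<^sub>R e_t + (\<Sum>i\<in>UNIV. fst (snd d) $ i *\<^sub>R e_x i) + (\<Sum>i\<in>UNIV. snd (snd d) $ i *\<^sub>R e_v i)"
proof -
  obtain t x v where d: "d = (t, x, v)" by (cases d) auto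
  show ?thesis unfolding d e_t_def e_x_def e_v_def sum_3
    apply (simp add: prod_eq_iff)
    by (metis vec3_expand add.assoc)
qed

lemma lin_expand:
  assumes "linear (L::pt \<Rightarrow> real)"
  shows "L d = fst d * L e_t + (\<Sum>i\<in>UNIV. fst (snd d) $ i * L (e_x i)) + (\<Sum>i\<in>UNIV. snd (snd d) $ i * L (e_v i))"
proof -
  have "L d = L (fst d *\<^sub>R e_t + (\<Sum>i\<in>UNIV. fst (snd d) $ i *\<^sub>R e_x i) + (\<Sum>i\<in>UNIV. snd (snd d) $ i *\<^sub>R e_v i))"
    using pt_expand by metis
  show ?thesis
    apply (subst pt_expand)
    using assms by (simp add: linear_add linear_scale linear_sum)
qed

lemma chain_pt:
  fixes \<psi> :: "pt \<Rightarrow> real"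
  assumes "\<psi> differentiable (at (\<gamma> s))" "(\<gamma> has_vector_derivative d) (at s)"
  shows "((\<lambda>s. \<psi> (\<gamma> s)) has_real_derivative (fst d * dirD \<psi> (\<gamma> s) e_t
     + (\<Sum>i\<in>UNIV. fst (snd d) $ i * dirD \<psi> (\<gamma> s) (e_x i))
     + (\<Sum>i\<in>UNIV. snd (snd d) $ i * dirD \<psi> (\<gamma> s) (e_v i)))) (at s)"
proof -
  obtain L where L: "(\<psi> has_derivative L) (at (\<gamma> s))" using assms(1) differentiable_def by blast
  have l: "linear L" using L has_derivative_linear by blast
  have "((\<lambda>s. \<psi> (\<gamma> s)) has_vector_derivative L d) (at s)"
    using vector_derivative_diff_chain_within[OF assms(2) has_derivative_at_withinI[OF L]] by (simp add: o_def)
  moreover have "L d = fst d * dirD \<psi> (\<gamma> s) e_t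
     + (\<Sum>i\<in>UNIV. fst (snd d) $ i * dirD \<psi> (\<gamma> s) (e_x i))
     + (\<Sum>i\<in>UNIV. snd (snd d) $ i * dirD \<psi> (\<gamma> s) (e_v i))"
    unfolding dirD_eq[OF L] by (rule lin_expand[OF l])
  ultimately show ?thesis by (simp add: has_real_derivative_iff_has_vector_derivative)
qed


definition e1 :: "real^3" where "e1 = axis 1 1"

lemma norm_e1[simp]: "norm e1 = 1" by (simp add: e1_def)
lemma e1_comp: "e1 $ i = (if i = 1 then 1 else 0)" by (simp add: e1_def axis_def)

lemma open_UmM: "open I \<Longrightarrow> open (UmM I)"
proof -
  assume "open I"
  have "UmM I = I \<times> UNIV" by (auto simp: UmM_def)
  thus ?thesis using \<open>open I\<close> by (simp add: open_Times)
qed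

lemma norm_line:
  fixes v :: "real^3"
  assumes "v \<noteq> 0"
  shows "((\<lambda>s. norm (v + s *\<^sub>R axis j 1)) has_real_derivative (v$j / norm v)) (at 0)"
proof -
  have n: "(norm has_derivative (\<lambda>h. h \<bullet> sgn v)) (at (v + 0 *\<^sub>R axis j 1))"
    using has_derivative_norm[OF assms] by simp
  have g: "((\<lambda>s. v + s *\<^sub>R axis j (1::real)) has_derivative (\<lambda>s. s *\<^sub>R axis j 1)) (at 0)"
    by (auto intro!: derivative_eq_intros)
  have H: "((\<lambda>s. norm (v + s *\<^sub>R axis j 1)) has_derivative (\<lambda>s. (s *\<^sub>R axis j 1) \<bullet> sgn v)) (at 0)"
    using has_derivative_compose[OF g n] by simp
  have E: "(\<lambda>s. (s *\<^sub>R axis j 1) \<bullet> sgn v) = (*) (v$j / norm v)"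
    by (rule ext) (simp add: inner_axis' sgn_div_norm divide_inverse mult_ac)
  show ?thesis unfolding has_field_derivative_def using H unfolding E .
qed

locale Setup =
  fixes I :: "real set" and a :: "real \<Rightarrow> real" and f :: "pt \<Rightarrow> real"
  assumes I_open: "open I" and a_pos: "\<And>t. t \<in> I \<Longrightarrow> a t > 0"
    and a_diff: "\<And>t. t \<in> I \<Longrightarrow> (a has_real_derivative deriv a t) (at t)"
    and f_smooth: "Cinf_on (UmM I) f"
    and rep: "\<And>t x v. t \<in> I \<Longrightarrow> f (t, x, v) = f (t, 0, norm v *\<^sub>R e1)"
begin

definition "Gt t q = dirD f (t, 0, q *\<^sub>R e1) e_t"
definition "Gq t q = dirD f (t, 0, q *\<^sub>R e1) (e_v 1)"
definition "Gqq t q = dirD (\<lambda>w. dirD f w (e_v 1)) (t, 0, q *\<^sub>R e1) (e_v 1)"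

lemma inU: "t \<in> I \<Longrightarrow> (t, x, v) \<in> UmM I" by (simp add: UmM_def)

lemma f_diff: "t \<in> I \<Longrightarrow> f differentiable (at (t, x, v))"
  using Cinf_diff[OF f_smooth inU] .

lemma f1_smooth: "Cinf_on (UmM I) (\<lambda>w. dirD f w (e_v 1))"
  using Cinf_dir[OF f_smooth Basis_e(3)] .

lemma f1_diff: "t \<in> I \<Longrightarrow> (\<lambda>w. dirD f w (e_v 1)) differentiable (at (t, x, v))"
  using Cinf_diff[OF f1_smooth inU] .

lemma sum_e1: "(\<Sum>i\<in>UNIV. e1 $ i * g i) = (g 1 :: real)"
  by (simp add: sum_3 e1_comp)

lemma line_vd: "((\<lambda>q. (t, 0::real^3, q *\<^sub>R e1)) has_vector_derivative (0, 0, e1)) (at q)"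
  apply (rule has_vector_derivative_Pair)
   apply (rule has_vector_derivative_const)
  apply (rule has_vector_derivative_Pair)
   apply (rule has_vector_derivative_const)
  using has_vector_derivative_scaleR[OF DERIV_ident has_vector_derivative_const[of e1]] by simp

lemma D1: "t \<in> I \<Longrightarrow> ((\<lambda>q. f (t, 0, q *\<^sub>R e1)) has_real_derivative Gq t q) (at q)"
  using chain_pt[of f "\<lambda>q. (t, 0, q *\<^sub>R e1)" q "(0,0,e1)", OF f_diff line_vd]
  by (simp add: Gq_def sum_e1)

lemma D2: "t \<in> I \<Longrightarrow> ((\<lambda>q. Gq t q) has_real_derivative Gqq t q) (at q)"
  using chain_pt[of "\<lambda>w. dirD f w (e_v 1)" "\<lambda>q. (t, 0, q *\<^sub>R e1)" q "(0,0,e1)", OF f1_diff line_vd]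
  by (simp add: Gq_def Gqq_def sum_e1)

lemma D3: "t \<in> I \<Longrightarrow> ((\<lambda>s. f (s, 0, q *\<^sub>R e1)) has_real_derivative Gt t q) (at t)"
proof -
  assume t: "t \<in> I"
  have "((\<lambda>s. (s, 0::real^3, q *\<^sub>R e1)) has_vector_derivative (1, 0, 0)) (at t)"
    apply (rule has_vector_derivative_Pair)
     apply (rule has_vector_derivative_id)
    apply (rule has_vector_derivative_Pair)
     apply (rule has_vector_derivative_const)
    apply (rule has_vector_derivative_const)
    done
  from chain_pt[of f "\<lambda>s. (s, 0, q *\<^sub>R e1)" t "(1,0,0)", OF f_diff[OF t] this]
  show ?thesis by (simp add: Gt_def)
qed

lemma D4:
  assumes t: "t \<in> I" and v: "v \<noteq> 0"
  shows "dirD f (t, x, v) (e_v j) = Gq t (norm v) * (v$j / norm v)"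
proof -
  have eq: "\<And>s. f ((t, x, v) + s *\<^sub>R e_v j) = f (t, 0, norm (v + s *\<^sub>R axis j 1) *\<^sub>R e1)"
  proof -
    fix s
    have "(t, x, v) + s *\<^sub>R e_v j = (t, x, v + s *\<^sub>R axis j 1)" by (simp add: e_v_def)
    thus "f ((t, x, v) + s *\<^sub>R e_v j) = f (t, 0, norm (v + s *\<^sub>R axis j 1) *\<^sub>R e1)"
      using rep[OF t, of x "v + s *\<^sub>R axis j 1"] by simp
  qed
  have "((\<lambda>s. f (t, 0, norm (v + s *\<^sub>R axis j 1) *\<^sub>R e1)) has_real_derivative Gq t (norm v) * (v$j / norm v)) (at 0)"
    using DERIV_chain2[OF D1[OF t] norm_line[OF v]] by simp
  thus ?thesis unfolding dirD_def eq by (rule DERIV_imp_deriv)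
qed

lemma D5:
  assumes t: "t \<in> I"
  shows "dirD f (t, x, v) e_t = Gt t (norm v)"
proof -
  have "((\<lambda>s. f (s + t, 0, norm v *\<^sub>R e1)) has_real_derivative Gt t (norm v)) (at 0)"
    using D3[OF t, of "norm v"] DERIV_shift[of "\<lambda>s. f (s, 0, norm v *\<^sub>R e1)" "Gt t (norm v)" 0 t] by simp
  moreover have "open ((\<lambda>s. s + t) -` I)"
    using I_open by (intro open_vimage continuous_intros) auto
  moreover have "0 \<in> (\<lambda>s. s + t) -` I" using t by simp
  ultimately have "((\<lambda>s. f ((t, x, v) + s *\<^sub>R e_t)) has_real_derivative Gt t (norm v)) (at 0)"
  proof (rule has_field_derivative_transform_within_open)
    fix s assume "s \<in> (\<lambda>s. s + t) -` I"
    hence st: "s + t \<in> I" by simp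
    have "(t, x, v) + s *\<^sub>R e_t = (s + t, x, v)" by (simp add: e_t_def)
    thus "f (s + t, 0, norm v *\<^sub>R e1) = f ((t, x, v) + s *\<^sub>R e_t)"
      using rep[OF st, of x v] by simp
  qed
  thus ?thesis unfolding dirD_def by (rule DERIV_imp_deriv)
qed

lemma D6:
  assumes t: "t \<in> I"
  shows "dirD f (t, x, v) (e_x j) = 0"
proof -
  have "\<And>s. f ((t, x, v) + s *\<^sub>R e_x j) = f (t, 0, norm v *\<^sub>R e1)"
  proof -
    fix s
    have "(t, x, v) + s *\<^sub>R e_x j = (t, x + s *\<^sub>R axis j 1, v)" by (simp add: e_x_def)
    thus "f ((t, x, v) + s *\<^sub>R e_x j) = f (t, 0, norm v *\<^sub>R e1)"
      using rep[OF t, of "x + s *\<^sub>R axis j 1" v] by simp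
  qed
  thus ?thesis unfolding dirD_def by simp
qed

lemma D7:
  assumes t: "t \<in> I" and v: "v \<noteq> 0"
  shows "dirD (\<lambda>w. dirD f w (e_v j)) (t, x, v) (e_v i)
    = Gqq t (norm v) * (v$i / norm v) * (v$j / norm v)
      + (((if i = j then 1 else 0) * norm v - v$j * (v$i / norm v)) / (norm v * norm v)) * Gq t (norm v)"
proof -
  define N where "N s = norm (v + s *\<^sub>R axis i (1::real))" for s
  define W where "W s = (v + s *\<^sub>R axis i (1::real)) $ j" for s
  have N0: "N 0 = norm v" and W0: "W 0 = v$j" by (simp_all add: N_def W_def)
  have A: "((\<lambda>s. Gq t (N s)) has_real_derivative Gqq t (norm v) * (v$i / norm v)) (at 0)"
    unfolding N_def using DERIV_chain2[OF D2[OF t] norm_line[OF v]] by simp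
  have Weq: "W = (\<lambda>s. v$j + s * (if i = j then 1 else 0))"
    by (rule ext) (simp add: W_def axis_def)
  have B: "(W has_real_derivative (if i = j then 1 else 0)) (at 0)"
    unfolding Weq by (auto intro!: derivative_eq_intros)
  have C: "(N has_real_derivative (v$i / norm v)) (at 0)"
    unfolding N_def using norm_line[OF v] .
  have Q: "((\<lambda>s. W s / N s) has_real_derivative
      (((if i = j then 1 else 0) * norm v - v$j * (v$i / norm v)) / (norm v * norm v))) (at 0)"
    using DERIV_divide[OF B C] v by (simp add: N0 W0)
  have P: "((\<lambda>s. Gq t (N s) * (W s / N s)) has_real_derivative
      Gqq t (norm v) * (v$i / norm v) * (v$j / norm v)
      + (((if i = j then 1 else 0) * norm v - v$j * (v$i / norm v)) / (norm v * norm v)) * Gq t (norm v)) (at 0)"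
    using DERIV_mult[OF A Q] by (simp add: N0 W0)
  have op: "open ((\<lambda>s. v + s *\<^sub>R axis i (1::real)) -` (- {0}))"
    by (auto intro!: open_vimage continuous_intros)
  have P2: "((\<lambda>s. dirD f ((t, x, v) + s *\<^sub>R e_v i) (e_v j)) has_real_derivative
      Gqq t (norm v) * (v$i / norm v) * (v$j / norm v)
      + (((if i = j then 1 else 0) * norm v - v$j * (v$i / norm v)) / (norm v * norm v)) * Gq t (norm v)) (at 0)"
    apply (rule has_field_derivative_transform_within_open[OF P op])
    using v D4[OF t] by (auto simp: e_v_def N_def W_def)
  thus ?thesis unfolding dirD_def[of "\<lambda>w. dirD f w (e_v j)"] by (rule DERIV_imp_deriv)
qed

lemma line_cont: "continuous_on UNIV (\<lambda>q::real. (t, 0::real^3, q *\<^sub>R e1))"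
  by (intro continuous_intros)

lemma line_in: "t \<in> I \<Longrightarrow> (\<lambda>q::real. (t, 0::real^3, q *\<^sub>R e1)) ` UNIV \<subseteq> UmM I"
  by (auto simp: UmM_def)

lemma Gq_cont: "t \<in> I \<Longrightarrow> continuous_on UNIV (Gq t)"
  unfolding Gq_def[abs_def]
  by (rule continuous_on_compose2[OF Cinf_cont[OF f1_smooth] line_cont line_in])

lemma Gt_cont: "t \<in> I \<Longrightarrow> continuous_on UNIV (Gt t)"
  unfolding Gt_def[abs_def]
  by (rule continuous_on_compose2[OF Cinf_cont[OF Cinf_dir[OF f_smooth Basis_e(1)]] line_cont line_in])

lemma H_cont: "t \<in> I \<Longrightarrow> continuous_on UNIV (\<lambda>q. f (t, 0, q *\<^sub>R e1))"
  by (rule continuous_on_compose2[OF Cinf_cont[OF f_smooth] line_cont line_in])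

end

locale SetupF = Setup +
  fixes F :: "real \<Rightarrow> real \<Rightarrow> real"
  assumes Frep: "\<And>z. z \<in> UmM I \<Longrightarrow> f z = F (fst z) (pmom a (fst z) (snd (snd z)))"
begin

lemma E0: assumes t: "t \<in> I" and p: "p \<ge> 0" shows "F t p = f (t, 0, (p / (a t)^2) *\<^sub>R e1)"
proof -
  have "f (t, 0, (p / (a t)^2) *\<^sub>R e1) = F t (pmom a t ((p / (a t)^2) *\<^sub>R e1))"
    using Frep[OF inU[OF t]] by simp
  also have "pmom a t ((p / (a t)^2) *\<^sub>R e1) = p"
    using a_pos[OF t] p by (simp add: pmom_def)
  finally show ?thesis by simp
qed

lemma E1: assumes t: "t \<in> I" and p: "p > 0"
  shows "(F t has_real_derivative Gq t (p / (a t)^2) / (a t)^2) (at p)"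
proof -
  have d: "((\<lambda>q. q / (a t)^2) has_real_derivative 1 / (a t)^2) (at p)"
    using DERIV_cdivide[OF DERIV_ident, of "(a t)^2" p] by simp
  have "((\<lambda>q. f (t, 0, (q / (a t)^2) *\<^sub>R e1)) has_real_derivative Gq t (p / (a t)^2) / (a t)^2) (at p)"
    using DERIV_chain2[OF D1[OF t] d] by simp
  thus ?thesis
    apply (rule has_field_derivative_transform_within_open[where S="{0<..}"])
    using p E0[OF t] by auto
qed

lemma E1': "t \<in> I \<Longrightarrow> p > 0 \<Longrightarrow> dp F t p = Gq t (p / (a t)^2) / (a t)^2"
  unfolding dp_def using E1 by (rule DERIV_imp_deriv)

lemma E2: assumes t: "t \<in> I" and p: "p > 0"
  shows "(dp F t has_real_derivative Gqq t (p / (a t)^2) / (a t)^4) (at p)"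
proof -
  have d: "((\<lambda>q. q / (a t)^2) has_real_derivative 1 / (a t)^2) (at p)"
    using DERIV_cdivide[OF DERIV_ident, of "(a t)^2" p] by simp
  have "((\<lambda>q. Gq t (q / (a t)^2) / (a t)^2) has_real_derivative Gqq t (p / (a t)^2) / (a t)^4) (at p)"
    using DERIV_cdivide[OF DERIV_chain2[OF D2[OF t] d], of "(a t)^2"]
    by (simp add: divide_divide_eq_left power_add[symmetric])
  thus ?thesis
    apply (rule has_field_derivative_transform_within_open[where S="{0<..}"])
    using p E1'[OF t] by auto
qed

lemma E2': "t \<in> I \<Longrightarrow> p > 0 \<Longrightarrow> dpp F t p = Gqq t (p / (a t)^2) / (a t)^4"
  unfolding dpp_def using E2 by (rule DERIV_imp_deriv)

lemma E3: assumes t: "t \<in> I" and p: "p > 0"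
  shows "((\<lambda>s. F s p) has_real_derivative
     Gt t (p / (a t)^2) + (-2 * p * deriv a t / (a t)^3) * Gq t (p / (a t)^2)) (at t)"
proof -
  have at: "a t \<noteq> 0" using a_pos[OF t] by simp
  have c0: "((\<lambda>s. p / (a s)^2) has_real_derivative
     ((0 * (a t)^2 - p * (of_nat 2 * (a t)^(2-1) * deriv a t)) / ((a t)^2 * (a t)^2))) (at t)"
    using DERIV_divide[OF DERIV_const DERIV_power[OF a_diff[OF t], of 2], of p] at by (simp add: mult_ac)
  have "((0 * (a t)^2 - p * (of_nat 2 * (a t)^(2-1) * deriv a t)) / ((a t)^2 * (a t)^2))
        = -2 * p * deriv a t / (a t)^3"
    using at by (simp add: field_simps power2_eq_square power3_eq_cube)
  with c0 have c: "((\<lambda>s. p / (a s)^2) has_real_derivative (-2 * p * deriv a t / (a t)^3)) (at t)"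
    by simp
  have g: "((\<lambda>s. (s, 0::real^3, (p / (a s)^2) *\<^sub>R e1)) has_vector_derivative
            (1, 0, (-2 * p * deriv a t / (a t)^3) *\<^sub>R e1)) (at t)"
    apply (rule has_vector_derivative_Pair)
     apply (rule has_vector_derivative_id)
    apply (rule has_vector_derivative_Pair)
     apply (rule has_vector_derivative_const)
    using has_vector_derivative_scaleR[OF c has_vector_derivative_const[of e1]] by simp
  have "((\<lambda>s. f (s, 0, (p / (a s)^2) *\<^sub>R e1)) has_real_derivative
     Gt t (p / (a t)^2) + (-2 * p * deriv a t / (a t)^3) * Gq t (p / (a t)^2)) (at t)"
    using chain_pt[OF f_diff[OF t] g] by (simp add: Gt_def Gq_def sum_3 e1_comp)
  thus ?thesis
    apply (rule has_field_derivative_transform_within_open[where S=I])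
    using t I_open p E0 by auto
qed

lemma E3': "t \<in> I \<Longrightarrow> p > 0 \<Longrightarrow> dt F t p = Gt t (p / (a t)^2) + (-2 * p * deriv a t / (a t)^3) * Gq t (p / (a t)^2)"
  unfolding dt_def using E3 by (rule DERIV_imp_deriv)

end


lemma dsum3:
  fixes v :: "real^3"
  shows "(\<Sum>i\<in>UNIV. \<Sum>j\<in>UNIV. ((if i = j then 1 else 0) / A2 + v$i * v$j / M2) * (\<alpha> * (v$i * v$j) + \<beta> * (if i = j then 1 else 0)))
    = \<alpha> * (v \<bullet> v) / A2 + 3 * \<beta> / A2 + \<alpha> * (v \<bullet> v) * (v \<bullet> v) / M2 + \<beta> * (v \<bullet> v) / M2"
  by (simp add: sum_3 inner_vec_def add_divide_distrib algebra_simps)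

lemma vv: "(v::real^3) \<bullet> v = (norm v)^2" by (simp add: power2_norm_eq_inner)

context SetupF begin

lemma D7':
  assumes t: "t \<in> I" and v: "v \<noteq> 0"
  shows "dirD (\<lambda>w. dirD f w (e_v j)) (t, x, v) (e_v i)
    = (Gqq t (norm v) / (norm v)^2 - Gq t (norm v) / (norm v)^3) * (v$i * v$j)
      + (Gq t (norm v) / norm v) * (if i = j then 1 else 0)"
  unfolding D7[OF t v] using v by (simp add: field_simps power2_eq_square power3_eq_cube)

lemma spray_val:
  assumes t: "t \<in> I" and v: "v \<noteq> 0"
  shows "spray a m f (t, x, v) = vzero a m t v * (Gt t (norm v) - 2 * (deriv a t / a t) * (norm v * Gq t (norm v)))"
proof -
  have s: "(\<Sum>i\<in>UNIV. v$i * (Gq t (norm v) * (v$i / norm v))) = Gq t (norm v) / norm v * (v \<bullet> v)"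
    by (simp add: inner_vec_def sum_distrib_left mult_ac)
  have "Gq t (norm v) / norm v * (v \<bullet> v) = norm v * Gq t (norm v)"
    using v by (simp add: vv power2_eq_square)
  thus ?thesis unfolding spray_def Let_def using D4[OF t v] D5[OF t] D6[OF t] s by simp
qed

lemma vlap_val:
  assumes t: "t \<in> I" and v: "v \<noteq> 0" and m: "m \<noteq> 0"
  shows "vlap a m f (t, x, v) = Gqq t (norm v) * (1 / (a t)^2 + (norm v)^2 / m^2)
     + Gq t (norm v) * (2 / ((a t)^2 * norm v) + 3 * norm v / m^2)"
proof -
  have s: "(\<Sum>i\<in>UNIV. 3 * v$i / m^2 * (Gq t (norm v) * (v$i / norm v))) = 3 * Gq t (norm v) / (m^2 * norm v) * (v \<bullet> v)"
    by (simp add: inner_vec_def sum_distrib_left sum_divide_distrib mult_ac)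
  have h1: "vlap a m f (t, x, v) =
    (\<Sum>i\<in>UNIV. \<Sum>j\<in>UNIV. ((if i = j then 1 else 0) / (a t)^2 + v$i * v$j / m^2) *
       ((Gqq t (norm v) / (norm v)^2 - Gq t (norm v) / (norm v)^3) * (v$i * v$j)
      + (Gq t (norm v) / norm v) * (if i = j then 1 else 0)))
    + (\<Sum>i\<in>UNIV. 3 * v$i / m^2 * (Gq t (norm v) * (v$i / norm v)))"
    unfolding vlap_def Let_def fst_conv snd_conv D7'[OF t v] D4[OF t v] ..
  have "vlap a m f (t, x, v) =
    (Gqq t (norm v) / (norm v)^2 - Gq t (norm v) / (norm v)^3) * (v \<bullet> v) / (a t)^2
     + 3 * (Gq t (norm v) / norm v) / (a t)^2
     + (Gqq t (norm v) / (norm v)^2 - Gq t (norm v) / (norm v)^3) * (v \<bullet> v) * (v \<bullet> v) / m^2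
     + (Gq t (norm v) / norm v) * (v \<bullet> v) / m^2
     + 3 * Gq t (norm v) / (m^2 * norm v) * (v \<bullet> v)"
    unfolding h1 dsum3 s ..
  also have "\<dots> = Gqq t (norm v) * (1 / (a t)^2 + (norm v)^2 / m^2)
     + Gq t (norm v) * (2 / ((a t)^2 * norm v) + 3 * norm v / m^2)"
    using v m a_pos[OF t] by (simp add: vv field_simps power2_eq_square power3_eq_cube)
  finally show ?thesis .
qed

lemma sqrt_fact: assumes A: "A > 0" shows "sqrt (m^2 * A^2 + (A^2 * r)^2) / A = sqrt (m^2 + A^2 * r^2)"
proof -
  have "m^2 * A^2 + (A^2 * r)^2 = A^2 * (m^2 + A^2 * r^2)" by (simp add: algebra_simps power2_eq_square)
  hence "sqrt (m^2 * A^2 + (A^2 * r)^2) = A * sqrt (m^2 + A^2 * r^2)"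
    using A by (simp add: real_sqrt_mult)
  thus ?thesis using A by simp
qed

lemma part2_eq:
  assumes t: "t \<in> I" and v: "v \<noteq> 0" and m: "m > 0"
  shows "FP a m \<sigma> f (t, x, v) =
    sqrt (m^2 * (a t)^2 + (pmom a t v)^2) / a t * dt F t (pmom a t v)
     - \<sigma>^2 / 2 * (((a t)^2 + (pmom a t v)^2 / m^2) * dpp F t (pmom a t v)
        + (2 * (a t)^2 / pmom a t v + 3 * pmom a t v / m^2) * dp F t (pmom a t v))"
proof -
  define A where "A = a t"
  define r where "r = norm v"
  have A: "A > 0" using a_pos[OF t] by (simp add: A_def)
  have r: "r > 0" using v by (simp add: r_def)
  have p: "pmom a t v = A^2 * r" by (simp add: pmom_def A_def r_def)
  have pp: "A^2 * r > 0" using A r by simp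
  have q: "A^2 * r / A^2 = r" using A by simp
  have dt: "dt F t (A^2 * r) = Gt t r + (-2 * (A^2 * r) * deriv a t / A^3) * Gq t r"
    using E3'[OF t pp] q by (simp add: A_def)
  have dp: "dp F t (A^2 * r) = Gq t r / A^2"
    using E1'[OF t pp] q by (simp add: A_def)
  have dpp: "dpp F t (A^2 * r) = Gqq t r / A^4"
    using E2'[OF t pp] q by (simp add: A_def)
  have m0: "m \<noteq> 0" using m by simp
  have vz: "vzero a m t v = sqrt (m^2 + A^2 * r^2)" by (simp add: vzero_def A_def r_def)
  have eqL: "sqrt (m^2 * A^2 + (A^2 * r)^2) / A * dt F t (A^2 * r) = spray a m f (t, x, v)"
    unfolding spray_val[OF t v] sqrt_fact[OF A] dt vz A_def[symmetric] r_def[symmetric]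
    using A r by (simp add: field_simps power2_eq_square power3_eq_cube)
  have eqR: "(A^2 + (A^2 * r)^2 / m^2) * dpp F t (A^2 * r)
        + (2 * A^2 / (A^2 * r) + 3 * (A^2 * r) / m^2) * dp F t (A^2 * r) = vlap a m f (t, x, v)"
    unfolding vlap_val[OF t v m0] dpp dp A_def[symmetric] r_def[symmetric]
    using A r m by (simp add: field_simps)
  show ?thesis unfolding FP_def p A_def[symmetric] eqL eqR ..
qed

lemma part2:
  assumes t: "t \<in> I" and v: "v \<noteq> 0" and m: "m > 0"
  shows "FP a m \<sigma> f (t, x, v) = 0 \<longleftrightarrow> FPred a m \<sigma> F t (pmom a t v)"
  unfolding part2_eq[OF t v m] FPred_def by simp

end


lemma deriv0_const:
  fixes g :: "real \<Rightarrow> real"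
  assumes "\<And>s. (g has_real_derivative 0) (at s)"
  shows "g x = g y"
proof -
  obtain c where "\<forall>s\<in>UNIV. g s = c"
    using has_field_derivative_zero_constant[of UNIV g] assms by auto
  thus ?thesis by simp
qed

lemma sum_if2:
  fixes i j :: 3
  assumes "i \<noteq> j"
  shows "(\<Sum>k\<in>UNIV. (if k = i then \<alpha> else if k = j then \<beta> else 0) * D k) = \<alpha> * D i + \<beta> * (D j :: real)"
  using assms exhaust_3[of i] exhaust_3[of j] by (auto simp: sum_3)

definition rotv :: "3 \<Rightarrow> 3 \<Rightarrow> real \<Rightarrow> real^3 \<Rightarrow> real^3" where
  "rotv i j \<theta> v = (\<chi> k. if k = i then cos \<theta> * v$i - sin \<theta> * v$j
                        else if k = j then sin \<theta> * v$i + cos \<theta> * v$j else v$k)"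

lemma rotv_split: "rotv i j \<theta> v = cos \<theta> *\<^sub>R (\<chi> k. if k = i then v$i else if k = j then v$j else 0)
   + sin \<theta> *\<^sub>R (\<chi> k. if k = i then - v$j else if k = j then v$i else 0)
   + (\<chi> k. if k = i \<or> k = j then 0 else v$k)"
  by (simp add: rotv_def vec_eq_iff)

lemma rotv_0: "rotv i j 0 v = v" by (simp add: rotv_def vec_eq_iff)

lemma rot_const:
  fixes f :: "pt \<Rightarrow> real"
  assumes ij: "i \<noteq> j"
    and diff: "\<And>w. f differentiable (at (t, 0, w))"
    and H: "\<And>w. w$i * dirD f (t, 0, w) (e_v j) - w$j * dirD f (t, 0, w) (e_v i) = 0"
  shows "f (t, 0, rotv i j \<theta> v) = f (t, 0, v)"
proof -
  define P where "P = (\<chi> k. if k = i then v$i else if k = j then v$j else (0::real))"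
  define Q where "Q = (\<chi> k. if k = i then - v$j else if k = j then v$i else (0::real))"
  define R where "R = (\<chi> k. if k = i \<or> k = j then 0 else v$k)"
  have d: "((\<lambda>\<theta>. (t, 0::real^3, rotv i j \<theta> v)) has_vector_derivative (0, 0, (- sin \<theta>) *\<^sub>R P + cos \<theta> *\<^sub>R Q)) (at \<theta>)" for \<theta>
    unfolding rotv_split P_def[symmetric] Q_def[symmetric] R_def[symmetric]
    apply (rule has_vector_derivative_Pair)
     apply (rule has_vector_derivative_const)
    apply (rule has_vector_derivative_Pair)
     apply (rule has_vector_derivative_const)
    by (auto intro!: derivative_eq_intros)
  have comp: "((- sin \<theta>) *\<^sub>R P + cos \<theta> *\<^sub>R Q) $ k =
     (if k = i then - (rotv i j \<theta> v)$j else if k = j then (rotv i j \<theta> v)$i else 0)" for \<theta> k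
    using ij by (auto simp: P_def Q_def rotv_def)
  have "((\<lambda>\<theta>. f (t, 0, rotv i j \<theta> v)) has_real_derivative 0) (at \<theta>)" for \<theta>
  proof -
    have "((\<lambda>\<theta>. f (t, 0, rotv i j \<theta> v)) has_real_derivative
      (0 * dirD f (t, 0, rotv i j \<theta> v) e_t
     + (\<Sum>k\<in>UNIV. (0::real^3) $ k * dirD f (t, 0, rotv i j \<theta> v) (e_x k))
     + (\<Sum>k\<in>UNIV. ((- sin \<theta>) *\<^sub>R P + cos \<theta> *\<^sub>R Q) $ k * dirD f (t, 0, rotv i j \<theta> v) (e_v k)))) (at \<theta>)"
      using chain_pt[OF diff d] by simp
    moreover have "(\<Sum>k\<in>UNIV. ((- sin \<theta>) *\<^sub>R P + cos \<theta> *\<^sub>R Q) $ k * dirD f (t, 0, rotv i j \<theta> v) (e_v k)) = 0"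
      unfolding comp sum_if2[OF ij] using H[of "rotv i j \<theta> v"] by simp
    ultimately show ?thesis by simp
  qed
  hence "f (t, 0, rotv i j \<theta> v) = f (t, 0, rotv i j 0 v)" by (rule deriv0_const)
  thus ?thesis by (simp add: rotv_0)
qed

lemma rot_step:
  fixes f :: "pt \<Rightarrow> real"
  assumes ij: "i \<noteq> j"
    and diff: "\<And>w. f differentiable (at (t, 0, w))"
    and H: "\<And>w. w$i * dirD f (t, 0, w) (e_v j) - w$j * dirD f (t, 0, w) (e_v i) = 0"
  shows "f (t, 0, v) = f (t, 0, \<chi> k. if k = i then sqrt ((v$i)^2 + (v$j)^2) else if k = j then 0 else v$k)"
proof (cases "(v$i)^2 + (v$j)^2 = 0")
  case True
  hence "v$i = 0" "v$j = 0" by (simp_all add: sum_power2_eq_zero_iff)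
  hence "(\<chi> k. if k = i then sqrt ((v$i)^2 + (v$j)^2) else if k = j then 0 else v$k) = v"
    by (auto simp: vec_eq_iff)
  thus ?thesis by simp
next
  case False
  define \<rho> where "\<rho> = sqrt ((v$i)^2 + (v$j)^2)"
  have "(v$i)^2 + (v$j)^2 > 0" using False by (metis add_nonneg_nonneg zero_le_power2 less_eq_real_def)
  hence \<rho>: "\<rho> > 0" unfolding \<rho>_def by (rule real_sqrt_gt_zero)
  have r2: "\<rho>^2 = (v$i)^2 + (v$j)^2" unfolding \<rho>_def
    by (rule real_sqrt_pow2) (simp add: add_nonneg_nonneg)
  have "(v$i / \<rho>)^2 + (- v$j / \<rho>)^2 = ((v$i)^2 + (v$j)^2) / \<rho>^2"
    by (simp add: power_divide add_divide_distrib)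
  also have "\<dots> = 1" unfolding r2[symmetric] using \<rho> by simp
  finally have "(v$i / \<rho>)^2 + (- v$j / \<rho>)^2 = 1" .
  then obtain \<theta> where th: "v$i / \<rho> = cos \<theta>" "- v$j / \<rho> = sin \<theta>" by (rule sincos_total_2pi)
  have "rotv i j \<theta> v = (\<chi> k. if k = i then \<rho> else if k = j then 0 else v$k)"
  proof -
    have "cos \<theta> * v$i - sin \<theta> * v$j = ((v$i)^2 + (v$j)^2) / \<rho>"
      unfolding th[symmetric] using \<rho> by (simp add: field_simps power2_eq_square)
    also have "\<dots> = \<rho>" unfolding r2[symmetric] using \<rho> by (simp add: power2_eq_square)
    finally have "cos \<theta> * v$i - sin \<theta> * v$j = \<rho>" .
    moreover have "sin \<theta> * v$i + cos \<theta> * v$j = 0"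
      unfolding th[symmetric] using \<rho> by (simp add: field_simps)
    ultimately show ?thesis using ij by (auto simp: rotv_def vec_eq_iff)
  qed
  thus ?thesis using rot_const[OF ij diff H, of \<theta> v] unfolding \<rho>_def by simp
qed

lemma x_indep:
  fixes f :: "pt \<Rightarrow> real"
  assumes sm: "Cinf_on (UmM I) f" and t: "t \<in> I"
    and H: "\<And>z i. z \<in> UmM I \<Longrightarrow> dirD f z (e_x i) = 0"
  shows "f (t, x, v) = f (t, 0, v)"
proof -
  have d: "((\<lambda>s. (t, s *\<^sub>R x, v)) has_vector_derivative (0, x, 0)) (at s)" for s
    apply (rule has_vector_derivative_Pair)
     apply (rule has_vector_derivative_const)
    apply (rule has_vector_derivative_Pair)
    using has_vector_derivative_scaleR[OF DERIV_ident has_vector_derivative_const[of x]] apply simp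
    by (rule has_vector_derivative_const)
  have "((\<lambda>s. f (t, s *\<^sub>R x, v)) has_real_derivative 0) (at s)" for s
  proof -
    have z: "(t, s *\<^sub>R x, v) \<in> UmM I" using t by (simp add: UmM_def)
    have "((\<lambda>s. f (t, s *\<^sub>R x, v)) has_real_derivative
      (0 * dirD f (t, s *\<^sub>R x, v) e_t
     + (\<Sum>k\<in>UNIV. x $ k * dirD f (t, s *\<^sub>R x, v) (e_x k))
     + (\<Sum>k\<in>UNIV. (0::real^3) $ k * dirD f (t, s *\<^sub>R x, v) (e_v k)))) (at s)"
      using chain_pt[OF Cinf_diff[OF sm z] d] by simp
    thus ?thesis using H[OF z] by simp
  qed
  hence "f (t, 1 *\<^sub>R x, v) = f (t, 0 *\<^sub>R x, v)" by (rule deriv0_const)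
  thus ?thesis by simp
qed

lemma norm_vec3: "norm (v::real^3) = sqrt ((v$1)^2 + (v$2)^2 + (v$3)^2)"
  by (simp add: norm_vec_def L2_set_def sum_3)

lemma v_radial:
  fixes f :: "pt \<Rightarrow> real"
  assumes sm: "Cinf_on (UmM I) f" and t: "t \<in> I" and inv: "invariant I f"
  shows "f (t, 0, v) = f (t, 0, norm v *\<^sub>R e1)"
proof -
  have diff: "\<And>w. f differentiable (at (t, 0, w))"
    using Cinf_diff[OF sm] t by (simp add: UmM_def)
  have H: "\<And>w i j. w$i * dirD f (t, 0, w) (e_v j) - w$j * dirD f (t, 0, w) (e_v i) = 0"
  proof -
    fix w i j
    have "(t, 0, w) \<in> UmM I" using t by (simp add: UmM_def)
    from inv[unfolded invariant_def, rule_format, OF this]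
    show "w$i * dirD f (t, 0, w) (e_v j) - w$j * dirD f (t, 0, w) (e_v i) = 0" by simp
  qed
  define \<rho> where "\<rho> = sqrt ((v$1)^2 + (v$2)^2)"
  define u where "u = (\<chi> k. if k = 1 then \<rho> else if k = 2 then 0 else v$k)"
  have s1: "f (t, 0, v) = f (t, 0, u)"
    unfolding u_def \<rho>_def by (rule rot_step[OF _ diff H]) simp
  have s2: "f (t, 0, u) = f (t, 0, \<chi> k. if k = 1 then sqrt ((u$1)^2 + (u$3)^2) else if k = 3 then 0 else u$k)"
    by (rule rot_step[OF _ diff H]) simp
  have r2: "\<rho>^2 = (v$1)^2 + (v$2)^2" unfolding \<rho>_def
    by (rule real_sqrt_pow2) (simp add: add_nonneg_nonneg)
  have "sqrt ((u$1)^2 + (u$3)^2) = norm v"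
    unfolding norm_vec3 by (simp add: u_def r2)
  hence "(\<chi> k. if k = 1 then sqrt ((u$1)^2 + (u$3)^2) else if k = 3 then 0 else u$k) = norm v *\<^sub>R e1"
    by (simp add: vec_eq_iff forall_3 u_def e1_comp)
  thus ?thesis using s1 s2 by simp
qed

lemma part1_fwd:
  fixes f :: "pt \<Rightarrow> real"
  assumes sm: "Cinf_on (UmM I) f" and a_pos: "\<forall>t\<in>I. a t > 0" and inv: "invariant I f"
  shows "\<exists>F. \<forall>z\<in>UmM I. f z = F (fst z) (pmom a (fst z) (snd (snd z)))"
proof (intro exI ballI)
  fix z assume z: "z \<in> UmM I"
  obtain t x v where zz: "z = (t, x, v)" by (cases z) auto
  have t: "t \<in> I" using z zz by (simp add: UmM_def)
  have Hx: "\<And>z i. z \<in> UmM I \<Longrightarrow> dirD f z (e_x i) = 0"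
    using inv unfolding invariant_def by blast
  have "f z = f (t, 0, norm v *\<^sub>R e1)"
    unfolding zz using x_indep[OF sm t Hx, of x v] v_radial[OF sm t inv, of v] by simp
  also have "norm v = pmom a t v / (a t)^2"
  proof -
    have "a t > 0" using a_pos t by simp
    thus ?thesis by (simp add: pmom_def)
  qed
  finally show "f z = (\<lambda>t p. f (t, 0, (p / (a t)^2) *\<^sub>R e1)) (fst z) (pmom a (fst z) (snd (snd z)))"
    by (simp add: zz)
qed

lemma Setup_from_F:
  fixes f :: "pt \<Rightarrow> real"
  assumes I_open: "open I" and a_pos: "\<forall>t\<in>I. a t > 0"
    and a_diff: "\<forall>t\<in>I. (a has_real_derivative deriv a t) (at t)"
    and sm: "Cinf_on (UmM I) f"
    and Frep: "\<forall>z\<in>UmM I. f z = F (fst z) (pmom a (fst z) (snd (snd z)))"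
  shows "SetupF I a f F"
proof -
  have rep: "f (t, x, v) = f (t, 0, norm v *\<^sub>R e1)" if t: "t \<in> I" for t x v
  proof -
    have "f (t, x, v) = F t (pmom a t v)" using Frep t by (auto simp: UmM_def)
    also have "pmom a t v = pmom a t (norm v *\<^sub>R e1)" by (simp add: pmom_def)
    also have "F t \<dots> = f (t, 0, norm v *\<^sub>R e1)" using Frep t by (auto simp: UmM_def)
    finally show ?thesis .
  qed
  show ?thesis
    apply unfold_locales
    using I_open apply simp
    using a_pos apply simp
    using a_diff apply simp
    using sm apply simp
     apply (erule rep)
    using Frep by blast
qed

lemma part1_bwd:
  fixes f :: "pt \<Rightarrow> real"
  assumes S: "SetupF I a f F"
  shows "invariant I f"
proof -
  interpret SetupF I a f F by (rule S)
  show ?thesis unfolding invariant_def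
  proof (intro ballI conjI allI)
    fix z i j assume z: "z \<in> UmM I"
    obtain t x v where zz: "z = (t, x, v)" by (cases z) auto
    have t: "t \<in> I" using z zz by (simp add: UmM_def)
    show "dirD f z (e_x i) = 0" unfolding zz by (rule D6[OF t])
    show "fst (snd z) $ i * dirD f z (e_x j) - fst (snd z) $ j * dirD f z (e_x i) +
          snd (snd z) $ i * dirD f z (e_v j) - snd (snd z) $ j * dirD f z (e_v i) = 0"
    proof (cases "v = 0")
      case True thus ?thesis unfolding zz using D6[OF t] by simp
    next
      case False thus ?thesis unfolding zz using D6[OF t] D4[OF t False] by simp
    qed
  qed
qed


definition w3 :: "real \<Rightarrow> real" where "w3 r = indicator {0..} r * (4 * pi * r^2)"

lemma w3_meas[measurable]: "w3 \<in> borel_measurable borel"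
  unfolding w3_def by measurable

lemma w3_nonneg: "w3 r \<ge> 0" by (simp add: w3_def)

lemma emeasure_lessThan_density:
  assumes x: "x > 0"
  shows "emeasure (density lborel (\<lambda>r. ennreal (w3 r))) {..<x} = ennreal (4 / 3 * pi * x^3)"
proof -
  have "emeasure (density lborel (\<lambda>r. ennreal (w3 r))) {..<x} = (\<integral>\<^sup>+ r. ennreal (w3 r) * indicator {..<x} r \<partial>lborel)"
    by (rule emeasure_density) auto
  also have "\<dots> = (\<integral>\<^sup>+ r. ennreal (4 * pi * r^2) * indicator {0..x} r \<partial>lborel)"
  proof (rule nn_integral_cong_AE)
    show "AE r in lborel. ennreal (w3 r) * indicator {..<x} r = ennreal (4 * pi * r^2) * indicator {0..x} r"
      using AE_lborel_singleton[of x] by eventually_elim (auto simp: w3_def indicator_def)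
  qed
  also have "\<dots> = ennreal (4/3 * pi * x^3 - 4/3 * pi * 0^3)"
  proof (rule nn_integral_has_integral_lebesgue')
    show "((\<lambda>r. 4 * pi * r^2) has_integral (4/3 * pi * x^3 - 4/3 * pi * 0^3)) {0..x}"
      using x by (intro fundamental_theorem_of_calculus)
        (auto intro!: derivative_eq_intros simp: has_real_derivative_iff_has_vector_derivative[symmetric] power2_eq_square)
  qed simp
  finally show ?thesis by simp
qed

lemma polar_measure:
  "distr (lborel :: (real^3) measure) borel norm = density lborel (\<lambda>r. ennreal (w3 r))"
proof (rule measure_eqI_generator_eq_countable[where \<Omega>=UNIV and E="range lessThan" and A="range (\<lambda>n::nat. {..< real n})"])
  show "Int_stable (range lessThan :: real set set)"
    unfolding Int_stable_def
  proof safe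
    fix a b :: real
    show "{..<a} \<inter> {..<b} \<in> range lessThan" by (rule range_eqI[of _ _ "min a b"]) auto
  qed
  show "range lessThan \<subseteq> Pow (UNIV :: real set)" by simp
  have sb: "sets (borel :: real measure) = sigma_sets UNIV (range lessThan)"
    unfolding borel_Iio by simp
  show "sets (distr (lborel :: (real^3) measure) borel norm) = sigma_sets UNIV (range lessThan)"
    using sb by simp
  show "sets (density lborel (\<lambda>r. ennreal (w3 r))) = sigma_sets UNIV (range lessThan)"
    using sb by simp
  have em: "emeasure (distr (lborel :: (real^3) measure) borel norm) {..<x} = (if x > 0 then ennreal (4 / 3 * pi * x^3) else 0)" for x
  proof -
    have "emeasure (distr (lborel :: (real^3) measure) borel norm) {..<x} = emeasure lborel (ball (0::real^3) x)"
      by (subst emeasure_distr) (auto simp: ball_def intro!: arg_cong[where f="emeasure lborel"])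
    also have "\<dots> = (if x > 0 then ennreal (4 / 3 * pi * x^3) else 0)"
    proof (cases "x > 0")
      case True
      thus ?thesis using emeasure_ball[of x "0::real^3"] by (simp add: unit_ball_vol_3)
    next
      case False
      hence "ball (0::real^3) x = {}" by auto
      thus ?thesis using False by (simp del: ball_eq_empty)
    qed
    finally show ?thesis .
  qed
  show "emeasure (distr (lborel :: (real^3) measure) borel norm) X = emeasure (density lborel (\<lambda>r. ennreal (w3 r))) X"
    if XR: "X \<in> range lessThan" for X
  proof -
    obtain x where X: "X = {..<x}" using XR by auto
    show ?thesis
    proof (cases "x > 0")
      case True thus ?thesis unfolding X em using emeasure_lessThan_density by simp
    next
      case False
      have "emeasure (density lborel (\<lambda>r. ennreal (w3 r))) {..<x} = (\<integral>\<^sup>+ r. ennreal (w3 r) * indicator {..<x} r \<partial>lborel)"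
        by (rule emeasure_density) auto
      also have "\<dots> = (\<integral>\<^sup>+ r. (0::ennreal) \<partial>(lborel::real measure))"
        by (rule nn_integral_cong) (use False in \<open>auto simp: w3_def indicator_def\<close>)
      finally show ?thesis unfolding X em using False by simp
    qed
  qed
  show "range (\<lambda>n::nat. {..< real n}) \<subseteq> range lessThan" by auto
  show "\<Union> (range (\<lambda>n::nat. {..< real n})) = UNIV"
    by (auto intro: reals_Archimedean2)
  show "countable (range (\<lambda>n::nat. {..< real n}))" by simp
  show "emeasure (distr (lborel :: (real^3) measure) borel norm) a \<noteq> \<infinity>" if "a \<in> range (\<lambda>n::nat. {..< real n})" for a
    using that by (auto simp: em split: if_splits)
qed

lemma polar_integral:
  fixes H :: "real \<Rightarrow> real"
  assumes H[measurable]: "H \<in> borel_measurable borel"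
  shows "(\<integral>v. H (norm v) \<partial>(lborel :: (real^3) measure)) = (\<integral>r. w3 r * H r \<partial>lborel)"
proof -
  have "(\<integral>v. H (norm v) \<partial>(lborel :: (real^3) measure)) = (\<integral>r. H r \<partial>distr (lborel :: (real^3) measure) borel norm)"
    by (rule integral_distr[symmetric]) auto
  also have "\<dots> = (\<integral>r. w3 r * H r \<partial>lborel)"
    unfolding polar_measure by (subst integral_density) (auto simp: w3_nonneg)
  finally show ?thesis .
qed


lemma lborel_reflect: "distr lborel borel uminus = (lborel :: (real^3) measure)"
proof -
  have "(lborel :: (real^3) measure) = density (distr lborel borel (\<lambda>x. 0 + (-1) *\<^sub>R x)) (\<lambda>_. \<bar>-1::real\<bar> ^ DIM(real^3))"
    by (rule lborel_affine) simp
  thus ?thesis by (simp add: density_1)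
qed

locale Part3 = SetupF +
  fixes m \<sigma> :: real
  assumes m_pos: "m > 0" and sig: "\<sigma> > 0" and I_int: "is_interval I"
  and FPr: "\<And>t p. t \<in> I \<Longrightarrow> p > 0 \<Longrightarrow> FPred a m \<sigma> F t p"
  and intF: "\<And>t. t \<in> I \<Longrightarrow> set_integrable lborel {0..} (\<lambda>p. p^2 * F t p)"
  and maj: "\<And>K. compact K \<Longrightarrow> K \<subseteq> I \<Longrightarrow> \<exists>g. set_integrable lborel {0<..} g \<and> (\<forall>t\<in>K. \<forall>p>0. \<bar>p^2 * dt F t p\<bar> \<le> g p)"
  and bdry: "\<And>t. t \<in> I \<Longrightarrow> ((\<lambda>p. p^2 * sqrt (m^2 * (a t)^2 + p^2) * dp F t p) \<longlongrightarrow> 0) at_top"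
begin

lemma f_cont_v: "t \<in> I \<Longrightarrow> continuous_on UNIV (\<lambda>v. f (t, x, v))"
  by (rule continuous_on_compose2[OF Cinf_cont[OF f_smooth], of UNIV "\<lambda>v. (t, x, v)"])
     (auto intro!: continuous_intros simp: UmM_def)

lemma vzero_pos: "vzero a m t v > 0"
  unfolding vzero_def using m_pos by (intro real_sqrt_gt_zero add_pos_nonneg) auto

lemma vzero_cont: "continuous_on UNIV (\<lambda>v. vzero a m t v)"
  unfolding vzero_def by (intro continuous_intros)

lemma Jsp_zero:
  assumes t: "t \<in> I"
  shows "Jsp a m f i t x = 0"
proof -
  define \<phi> where "\<phi> v = v$i * f (t, x, v) * (m * (a t)^3 / vzero a m t v)" for v :: "real^3"
  have cont: "continuous_on UNIV \<phi>"
    unfolding \<phi>_def using vzero_pos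
    by (intro continuous_intros f_cont_v[OF t] vzero_cont) (auto simp: less_le)
  hence meas[measurable]: "\<phi> \<in> borel_measurable borel" by (rule borel_measurable_continuous_onI)
  have odd: "\<phi> (- v) = - \<phi> v" for v
  proof -
    have "f (t, x, - v) = f (t, x, v)" using rep[OF t, of x "- v"] rep[OF t, of x v] by simp
    moreover have "vzero a m t (- v) = vzero a m t v" by (simp add: vzero_def)
    ultimately show ?thesis by (simp add: \<phi>_def)
  qed
  have "(\<integral>v. \<phi> v \<partial>lborel) = (\<integral>v. \<phi> v \<partial>distr lborel borel uminus)"
    by (simp add: lborel_reflect)
  also have "\<dots> = (\<integral>v. \<phi> (- v) \<partial>lborel)"
    by (rule integral_distr) auto
  also have "\<dots> = - (\<integral>v. \<phi> v \<partial>lborel)"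
    unfolding odd by simp
  finally have "(\<integral>v. \<phi> v \<partial>lborel) = 0" by simp
  thus ?thesis unfolding Jsp_def \<phi>_def[symmetric] by simp
qed

lemma Hc_meas[measurable]: "t \<in> I \<Longrightarrow> (\<lambda>q. f (t, 0, q *\<^sub>R e1)) \<in> borel_measurable borel"
  by (rule borel_measurable_continuous_onI[OF H_cont])

lemma J0_formula:
  assumes t: "t \<in> I"
  shows "(a t)^3 * J0 a m f t x = 4 * pi * set_lebesgue_integral lborel {0..} (\<lambda>p. p^2 * F t p)"
proof -
  define A where "A = a t"
  have A: "A > 0" using a_pos[OF t] by (simp add: A_def)
  define Hc where "Hc q = f (t, 0, q *\<^sub>R e1)" for q
  have Hm[measurable]: "Hc \<in> borel_measurable borel" unfolding Hc_def[abs_def] using Hc_meas[OF t] .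
  have "J0 a m f t x = (1 / m) * (\<integral>v. (m * A^3) * Hc (norm v) \<partial>(lborel::(real^3) measure))"
  proof -
    have pw: "vzero a m t v * f (t, x, v) * (m * (a t)^3 / vzero a m t v) = (m * A^3) * Hc (norm v)" for v
    proof -
      have "vzero a m t v \<noteq> 0" using vzero_pos[of t v] by simp
      thus ?thesis using rep[OF t, of x v] by (simp add: A_def Hc_def field_simps)
    qed
    show ?thesis unfolding J0_def pw by simp
  qed
  also have "\<dots> = A^3 * (\<integral>v. Hc (norm v) \<partial>(lborel::(real^3) measure))"
    using m_pos by simp
  also have "(\<integral>v. Hc (norm v) \<partial>(lborel::(real^3) measure)) = (\<integral>r. w3 r * Hc r \<partial>lborel)"
    by (rule polar_integral[OF Hm])
  finally have J: "A^3 * J0 a m f t x = A^6 * (\<integral>r. w3 r * Hc r \<partial>lborel)"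
    by (simp add: power_add[symmetric] mult.assoc[symmetric])
  have "set_lebesgue_integral lborel {0..} (\<lambda>p. p^2 * F t p)
        = (\<integral>p. indicator {0..} p * (p^2 * F t p) \<partial>lborel)"
    by (simp add: set_lebesgue_integral_def)
  also have "\<dots> = \<bar>A^2\<bar> *\<^sub>R (\<integral>r. indicator {0..} (0 + A^2 * r) * ((0 + A^2 * r)^2 * F t (0 + A^2 * r)) \<partial>lborel)"
    by (rule lborel_integral_real_affine) (use A in simp)
  also have "(\<integral>r. indicator {0..} (0 + A^2 * r) * ((0 + A^2 * r)^2 * F t (0 + A^2 * r)) \<partial>lborel)
      = (\<integral>r. (A^4 / (4 * pi)) * (w3 r * Hc r) \<partial>lborel)"
  proof (rule Bochner_Integration.integral_cong)
    fix r :: real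
    show "indicator {0..} (0 + A^2 * r) * ((0 + A^2 * r)^2 * F t (0 + A^2 * r)) = (A^4 / (4 * pi)) * (w3 r * Hc r)"
    proof (cases "r \<ge> 0")
      case True
      have "F t (A^2 * r) = Hc r" unfolding Hc_def using E0[OF t, of "A^2 * r"] A True by (simp add: A_def)
      thus ?thesis using True A by (simp add: w3_def power_mult_distrib field_simps)
    next
      case False
      hence "\<not> (0 \<le> A^2 * r)" using A by (simp add: zero_le_mult_iff)
      thus ?thesis using False by (simp add: w3_def)
    qed
  qed simp
  finally have S: "set_lebesgue_integral lborel {0..} (\<lambda>p. p^2 * F t p) = A^2 * (A^4 / (4 * pi)) * (\<integral>r. w3 r * Hc r \<partial>lborel)"
    by simp
  show ?thesis unfolding A_def[symmetric] J S by (simp add: power_add[symmetric])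
qed

lemma dtD: "t \<in> I \<Longrightarrow> p > 0 \<Longrightarrow> ((\<lambda>s. F s p) has_real_derivative dt F t p) (at t)"
  using E3[of t p] E3'[of t p] by simp

lemma dpD: "t \<in> I \<Longrightarrow> p > 0 \<Longrightarrow> (dp F t has_real_derivative dpp F t p) (at p)"
  using E2[of t p] E2'[of t p] by simp

lemma isCont_UNIV: "continuous_on UNIV g \<Longrightarrow> isCont g x"
  by (simp add: continuous_on_eq_continuous_at)

lemma dt_isCont:
  assumes t: "t \<in> I" and p: "p > 0"
  shows "isCont (\<lambda>q. q^2 * dt F t q) p"
proof -
  have ev: "eventually (\<lambda>q. q^2 * dt F t q = q^2 * (Gt t (q / (a t)^2) + (-2 * q * deriv a t / (a t)^3) * Gq t (q / (a t)^2))) (nhds p)"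
  proof -
    have "eventually (\<lambda>q. q \<in> {0<..}) (nhds p)" using p by (intro eventually_nhds_in_open) auto
    thus ?thesis by eventually_elim (use E3' t in auto)
  qed
  have "isCont (\<lambda>q. q^2 * (Gt t (q / (a t)^2) + (-2 * q * deriv a t / (a t)^3) * Gq t (q / (a t)^2))) p"
    using a_pos[OF t]
    by (intro continuous_intros isCont_o2[OF _ isCont_UNIV[OF Gt_cont[OF t]]] isCont_o2[OF _ isCont_UNIV[OF Gq_cont[OF t]]]) auto
  thus ?thesis using isCont_cong[OF ev] by simp
qed

lemma dt_cont_on: "t \<in> I \<Longrightarrow> continuous_on {0<..} (\<lambda>q. q^2 * dt F t q)"
  using dt_isCont by (intro continuous_at_imp_continuous_on) auto

lemma key_identity:
  assumes t: "t \<in> I" and p: "p > 0"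
  shows "p^2 * dt F t p = (\<sigma>^2 * a t / (2 * m^2)) *
     ((2 * p * sqrt (m^2 * (a t)^2 + p^2) + p^3 / sqrt (m^2 * (a t)^2 + p^2)) * dp F t p
      + p^2 * sqrt (m^2 * (a t)^2 + p^2) * dpp F t p)"
proof -
  define A where "A = a t"
  define S where "S = sqrt (m^2 * A^2 + p^2)"
  have A: "A > 0" using a_pos[OF t] by (simp add: A_def)
  have m: "m > 0" by (rule m_pos)
  have Sp: "S > 0" unfolding S_def using p by (intro real_sqrt_gt_zero add_nonneg_pos) auto
  have S2: "S^2 = m^2 * A^2 + p^2" unfolding S_def by (rule real_sqrt_pow2) simp
  have FP: "S / A * dt F t p = \<sigma>^2 / 2 * ((A^2 + p^2 / m^2) * dpp F t p + (2 * A^2 / p + 3 * p / m^2) * dp F t p)"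
    using FPr[OF t p] by (simp add: FPred_def A_def S_def)
  have e1: "A^2 + p^2 / m^2 = S^2 / m^2" using m S2 by (simp add: field_simps)
  have "2 * p * S + p^3 / S = (2 * p * S^2 + p^3) / S"
    using Sp by (simp add: field_simps power2_eq_square power3_eq_cube)
  also have "\<dots> = (2 * A^2 * m^2 * p + 3 * p^3) / S"
    unfolding S2 by (simp add: algebra_simps power3_eq_cube power2_eq_square)
  finally have e2: "2 * p * S + p^3 / S = (2 * A^2 * m^2 * p + 3 * p^3) / S" .
  have dt: "dt F t p = A / S * (\<sigma>^2 / 2 * ((S^2 / m^2) * dpp F t p + (2 * A^2 / p + 3 * p / m^2) * dp F t p))"
    using FP A Sp unfolding e1 by (simp add: field_simps)
  show ?thesis unfolding A_def[symmetric] S_def[symmetric] e2 dt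
    using A Sp m p by (simp add: field_simps power2_eq_square power3_eq_cube)
qed

lemma Psi_zero:
  assumes t: "t \<in> I" and int: "set_integrable lborel {0<..} (\<lambda>p. p^2 * dt F t p)"
  shows "set_lebesgue_integral lborel {0<..} (\<lambda>p. p^2 * dt F t p) = 0"
proof -
  define A where "A = a t"
  have A: "A > 0" using a_pos[OF t] by (simp add: A_def)
  define k where "k = \<sigma>^2 * a t / (2 * m^2)"
  define S where "S p = sqrt (m^2 * A^2 + p^2)" for p
  define Fa where "Fa p = k * (p^2 * S p * dp F t p)" for p
  have Spos: "S p > 0" for p unfolding S_def using m_pos A
    by (intro real_sqrt_gt_zero add_pos_nonneg) auto
  have dS: "(S has_real_derivative p / S p) (at p)" for p
  proof -
    have "((\<lambda>p. m^2 * A^2 + p^2) has_real_derivative 2 * p) (at p)"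
      by (auto intro!: derivative_eq_intros)
    from DERIV_chain2[OF DERIV_real_sqrt[of "m^2 * A^2 + p^2"] this]
    show ?thesis using m_pos A Spos[of p] unfolding S_def
      by (simp add: add_pos_nonneg field_simps)
  qed
  have dFa: "(Fa has_real_derivative p^2 * dt F t p) (at p)" if p: "p > 0" for p
  proof -
    have d1: "((\<lambda>p. p^2 * S p) has_real_derivative (2 * p * S p + p^2 * (p / S p))) (at p)"
      using DERIV_mult[OF DERIV_pow[of 2 p] dS[of p]] by (simp add: mult_ac)
    have d2: "((\<lambda>p. p^2 * S p * dp F t p) has_real_derivative
        (2 * p * S p + p^2 * (p / S p)) * dp F t p + dpp F t p * (p^2 * S p)) (at p)"
      using DERIV_mult[OF d1 dpD[OF t p]] by simp
    have "k * ((2 * p * S p + p^2 * (p / S p)) * dp F t p + dpp F t p * (p^2 * S p)) = p^2 * dt F t p"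
      unfolding key_identity[OF t p] k_def S_def A_def by (simp add: power3_eq_cube power2_eq_square algebra_simps)
    thus ?thesis using DERIV_cmult[OF d2, of k] unfolding Fa_def by simp
  qed
  have limR: "(Fa \<longlongrightarrow> 0) (at_right 0)"
  proof -
    define g where "g p = k * (p^2 * S p * (Gq t (p / A^2) / A^2))" for p
    have "isCont g 0" unfolding g_def S_def using A
      by (intro continuous_intros isCont_o2[OF _ isCont_UNIV[OF Gq_cont[OF t]]]) auto
    hence "(g \<longlongrightarrow> g 0) (at 0)" by (simp add: isCont_def)
    hence "(g \<longlongrightarrow> 0) (at_right 0)" by (simp add: g_def filterlim_at_split)
    moreover have "eventually (\<lambda>p. g p = Fa p) (at_right 0)"
      using eventually_at_right_less[of "0::real"]
      by eventually_elim (simp add: g_def Fa_def E1'[OF t] A_def)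
    ultimately show ?thesis by (rule Lim_transform_eventually)
  qed
  have limT: "(Fa \<longlongrightarrow> 0) at_top"
  proof -
    have "((\<lambda>p. k * (p^2 * sqrt (m^2 * (a t)^2 + p^2) * dp F t p)) \<longlongrightarrow> k * 0) at_top"
      by (rule tendsto_mult[OF tendsto_const bdry[OF t]])
    moreover have "Fa = (\<lambda>p. k * (p^2 * sqrt (m^2 * (a t)^2 + p^2) * dp F t p))"
      by (rule ext) (simp add: Fa_def S_def A_def)
    ultimately show ?thesis by simp
  qed
  have "(LBINT x=ereal 0..\<infinity>. x^2 * dt F t x) = 0 - 0"
  proof (rule interval_integral_FTC_integrable[where F=Fa])
    show "ereal 0 < \<infinity>" by simp
    show "(Fa has_vector_derivative x^2 * dt F t x) (at x)" if "ereal 0 < ereal x" "ereal x < \<infinity>" for x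
      using dFa[of x] that by (simp add: has_real_derivative_iff_has_vector_derivative)
    show "isCont (\<lambda>x. x^2 * dt F t x) x" if "ereal 0 < ereal x" "ereal x < \<infinity>" for x
      using dt_isCont[OF t, of x] that by simp
    show "set_integrable lborel (einterval (ereal 0) \<infinity>) (\<lambda>x. x^2 * dt F t x)"
      using int by (simp add: einterval_eq_Ici)
    show "((Fa \<circ> real_of_ereal) \<longlongrightarrow> 0) (at_right (ereal 0))"
      using limR by (simp add: ereal_tendsto_simps1)
    show "((Fa \<circ> real_of_ereal) \<longlongrightarrow> 0) (at_left \<infinity>)"
      using limT by (simp add: ereal_tendsto_simps1)
  qed
  thus ?thesis by (simp add: interval_lebesgue_integral_def einterval_eq_Ici)
qed

lemma Phi_deriv:
  assumes t: "t \<in> I"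
  shows "((\<lambda>\<tau>. set_lebesgue_integral lborel {0<..} (\<lambda>p. p^2 * F \<tau> p)) has_real_derivative 0) (at t)"
proof -
  obtain \<delta> where \<delta>: "\<delta> > 0" "cball t \<delta> \<subseteq> I" using I_open t open_contains_cball by blast
  obtain g where g: "set_integrable lborel {0<..} g" "\<forall>\<tau>\<in>cball t \<delta>. \<forall>p>0. \<bar>p^2 * dt F \<tau> p\<bar> \<le> g p"
    using maj[OF compact_cball \<delta>(2)] by blast
  define w where "w p = indicator {0<..} p * g p" for p :: real
  have wint: "integrable lborel w" using g(1) by (simp add: set_integrable_def w_def[abs_def])
  define \<psi> where "\<psi> p = indicator {0<..} p * (p^2 * dt F t p)" for p :: real
  have \<psi>m: "\<psi> \<in> borel_measurable lborel"
    using borel_measurable_continuous_on_indicator[of "{0<..}" "\<lambda>p. p^2 * dt F t p", OF _ dt_cont_on[OF t]]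
    unfolding \<psi>_def[abs_def] by simp
  have gbound: "\<bar>dt F \<tau> p\<bar> \<le> g p / p^2" if "\<tau> \<in> cball t \<delta>" "p > 0" for \<tau> p
  proof -
    have "\<bar>p^2 * dt F \<tau> p\<bar> \<le> g p" using g(2) that by blast
    thus ?thesis using that(2) by (simp add: abs_mult field_simps)
  qed
  have \<psi>int: "integrable lborel \<psi>"
  proof (rule Bochner_Integration.integrable_bound[OF wint \<psi>m])
    show "AE x in lborel. norm (\<psi> x) \<le> norm (w x)"
    proof (rule AE_I2)
      fix p :: real
      show "norm (\<psi> p) \<le> norm (w p)"
      proof (cases "p > 0")
        case True
        have "\<bar>p^2 * dt F t p\<bar> \<le> g p" using g(2) True \<delta>(1) by auto
        thus ?thesis using True by (simp add: \<psi>_def w_def)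
      qed (simp add: \<psi>_def w_def)
    qed
  qed
  have Psi0: "integral\<^sup>L lborel \<psi> = 0"
  proof -
    have "set_integrable lborel {0<..} (\<lambda>p. p^2 * dt F t p)"
      using \<psi>int by (simp add: set_integrable_def \<psi>_def[abs_def])
    from Psi_zero[OF t this] show ?thesis by (simp add: set_lebesgue_integral_def \<psi>_def[abs_def])
  qed
  define \<Phi> where "\<Phi> \<tau> = set_lebesgue_integral lborel {0<..} (\<lambda>p. p^2 * F \<tau> p)" for \<tau>
  have int\<tau>: "integrable lborel (\<lambda>p. indicator {0<..} p * (p^2 * F \<tau> p))" if "\<tau> \<in> I" for \<tau>
  proof -
    have "set_integrable lborel {0<..} (\<lambda>p. p^2 * F \<tau> p)"
      by (rule set_integrable_subset[OF intF[OF that]]) auto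
    thus ?thesis by (simp add: set_integrable_def)
  qed
  have "((\<lambda>h. (\<Phi> (t + h) - \<Phi> t) / h) \<longlongrightarrow> 0) (at 0 within ball 0 \<delta>)"
  proof (subst tendsto_at_iff_sequentially, intro allI impI)
    fix X :: "nat \<Rightarrow> real" assume X: "\<forall>i. X i \<in> ball 0 \<delta> - {0}" and Xl: "X \<longlonglongrightarrow> 0"
    define s where "s i p = (indicator {0<..} p * (p^2 * F (t + X i) p) - indicator {0<..} p * (p^2 * F t p)) / X i" for i p
    have tX: "t + X i \<in> cball t \<delta>" for i
    proof -
      have "\<bar>X i\<bar> < \<delta>" using X by (auto simp: dist_norm)
      thus ?thesis by (simp add: dist_norm)
    qed
    have tXI: "t + X i \<in> I" for i using tX \<delta>(2) by auto
    have Xnz: "X i \<noteq> 0" for i using X by auto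
    have eq: "(\<Phi> (t + X i) - \<Phi> t) / X i = integral\<^sup>L lborel (s i)" for i
      unfolding s_def \<Phi>_def set_lebesgue_integral_def using int\<tau>[OF tXI] int\<tau>[OF t] by simp
    have sm: "s i \<in> borel_measurable lborel" for i
      unfolding s_def[abs_def]
      by (intro borel_measurable_divide borel_measurable_diff borel_measurable_const
            borel_measurable_integrable int\<tau>[OF tXI] int\<tau>[OF t])
    have lim: "(\<lambda>i. s i p) \<longlonglongrightarrow> \<psi> p" for p
    proof (cases "p > 0")
      case True
      have "((\<lambda>h. (F (t + h) p - F t p) / h) \<longlongrightarrow> dt F t p) (at 0)"
        using dtD[OF t True] by (simp add: DERIV_def)
      hence "((\<lambda>h. (F (t + h) p - F t p) / h) \<circ> X) \<longlonglongrightarrow> dt F t p"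
        using Xnz Xl tendsto_at_iff_sequentially[of "\<lambda>h. (F (t + h) p - F t p) / h" "dt F t p" 0 UNIV] by auto
      hence "(\<lambda>i. p^2 * ((F (t + X i) p - F t p) / X i)) \<longlonglongrightarrow> p^2 * dt F t p"
        by (intro tendsto_mult tendsto_const) (simp add: o_def)
      moreover have "s i p = p^2 * ((F (t + X i) p - F t p) / X i)" for i
        using True by (simp add: s_def right_diff_distrib)
      ultimately show ?thesis using True by (simp add: \<psi>_def)
    next
      case False thus ?thesis by (simp add: s_def \<psi>_def)
    qed
    have bnd: "norm (s i p) \<le> w p" for i p
    proof (cases "p > 0")
      case True
      have "norm (F (t + X i) p - F t p) \<le> (g p / p^2) * norm ((t + X i) - t)"
      proof (rule field_differentiable_bound[of "cball t \<delta>" "\<lambda>\<tau>. F \<tau> p" "\<lambda>\<tau>. dt F \<tau> p"])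
        show "convex (cball t \<delta>)" by simp
        show "((\<lambda>\<tau>. F \<tau> p) has_field_derivative dt F z p) (at z within cball t \<delta>)" if "z \<in> cball t \<delta>" for z
        proof -
          have "z \<in> I" using that \<delta>(2) by auto
          thus ?thesis using dtD[OF _ True, of z] by (simp add: has_field_derivative_at_within)
        qed
        show "norm (dt F z p) \<le> g p / p^2" if "z \<in> cball t \<delta>" for z
          using gbound[OF that True] by simp
        show "t + X i \<in> cball t \<delta>" by (rule tX)
        show "t \<in> cball t \<delta>" using \<delta>(1) by simp
      qed
      hence "\<bar>F (t + X i) p - F t p\<bar> \<le> (g p / p^2) * \<bar>X i\<bar>" by simp
      hence "p^2 * \<bar>F (t + X i) p - F t p\<bar> / \<bar>X i\<bar> \<le> g p"
        using True Xnz[of i] by (simp add: field_simps)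
      moreover have "norm (s i p) = p^2 * \<bar>F (t + X i) p - F t p\<bar> / \<bar>X i\<bar>"
        using True by (simp add: s_def abs_mult abs_divide right_diff_distrib[symmetric])
      ultimately show ?thesis using True by (simp add: w_def)
    next
      case False thus ?thesis by (simp add: s_def w_def)
    qed
    have "(\<lambda>i. integral\<^sup>L lborel (s i)) \<longlonglongrightarrow> integral\<^sup>L lborel \<psi>"
      by (rule integral_dominated_convergence[OF \<psi>m sm wint]) (auto intro!: AE_I2 lim bnd[unfolded real_norm_def])
    thus "((\<lambda>h. (\<Phi> (t + h) - \<Phi> t) / h) \<circ> X) \<longlonglongrightarrow> 0"
      unfolding Psi0 by (simp add: o_def eq)
  qed
  moreover have "at (0::real) within ball 0 \<delta> = at 0" by (rule at_within_open) (use \<delta> in auto)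
  ultimately have "((\<lambda>h. (\<Phi> (t + h) - \<Phi> t) / h) \<longlongrightarrow> 0) (at 0)"
    by simp
  hence "(\<Phi> has_real_derivative 0) (at t)" by (simp add: DERIV_def)
  thus ?thesis unfolding \<Phi>_def[abs_def] .
qed

lemma C_const: "\<exists>C. \<forall>t\<in>I. 4 * pi * set_lebesgue_integral lborel {0..} (\<lambda>p. p^2 * F t p) = C"
proof -
  define \<Phi> where "\<Phi> \<tau> = set_lebesgue_integral lborel {0<..} (\<lambda>p. p^2 * F \<tau> p)" for \<tau>
  have "\<exists>c. \<forall>x\<in>I. \<Phi> x = c"
  proof (rule has_field_derivative_zero_constant)
    show "convex I" by (rule is_interval_convex[OF I_int])
    show "(\<Phi> has_field_derivative 0) (at x within I)" if "x \<in> I" for x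
      using Phi_deriv[OF that] unfolding \<Phi>_def[abs_def] by (rule has_field_derivative_at_within)
  qed
  then obtain c where c: "\<And>x. x \<in> I \<Longrightarrow> \<Phi> x = c" by blast
  have eq: "set_lebesgue_integral lborel {0..} (\<lambda>p. p^2 * F t p) = \<Phi> t" if t: "t \<in> I" for t
  proof -
    have i1: "set_integrable lborel {0..} (\<lambda>p. p^2 * F t p)" by (rule intF[OF t])
    have i2: "set_integrable lborel {0<..} (\<lambda>p. p^2 * F t p)"
      by (rule set_integrable_subset[OF i1]) auto
    show ?thesis unfolding \<Phi>_def
    proof (rule set_integral_cong_set)
      show "set_borel_measurable lborel {0<..} (\<lambda>p. p^2 * F t p)"
        using i2 unfolding set_integrable_def set_borel_measurable_def by (rule borel_measurable_integrable)
      show "set_borel_measurable lborel {0..} (\<lambda>p. p^2 * F t p)"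
        using i1 unfolding set_integrable_def set_borel_measurable_def by (rule borel_measurable_integrable)
      have "AE x in (lborel::real measure). x \<noteq> 0" by (rule AE_lborel_singleton)
      thus "AE x in (lborel::real measure). (x \<in> {0<..}) = (x \<in> {0..})"
        by eventually_elim auto
    qed
  qed
  show ?thesis
    by (rule exI[of _ "4 * pi * c"]) (auto simp: eq c)
qed

end

theorem mainTheorem12:
  fixes I :: "real set" and a :: "real \<Rightarrow> real" and m \<sigma> :: real
  assumes I_open: "open I" and I_int: "is_interval I" and I_ne: "I \<noteq> {}"
    and a_smooth: "Cinf_on I a" and a_pos: "\<forall>t\<in>I. a t > 0"
    and m_pos: "m > 0" and sigma_pos: "\<sigma> > 0"
  shows
   "(\<forall>f. Cinf_on (UmM I) f \<longrightarrow>
        (invariant I f \<longleftrightarrow>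
          (\<exists>F. \<forall>z\<in>UmM I. f z = F (fst z) (pmom a (fst z) (snd (snd z))))))
    \<and>
    (\<forall>f F. Cinf_on (UmM I) f \<longrightarrow>
        (\<forall>z\<in>UmM I. f z = F (fst z) (pmom a (fst z) (snd (snd z)))) \<longrightarrow>
        (\<forall>z\<in>UmM I. snd (snd z) \<noteq> 0 \<longrightarrow>
            (FP a m \<sigma> f z = 0 \<longleftrightarrow> FPred a m \<sigma> F (fst z) (pmom a (fst z) (snd (snd z))))))
    \<and>
    (\<forall>f F. Cinf_on (UmM I) f \<longrightarrow>
        (\<forall>z\<in>UmM I. f z = F (fst z) (pmom a (fst z) (snd (snd z)))) \<longrightarrow>
        (\<forall>t\<in>I. \<forall>p>0. FPred a m \<sigma> F t p) \<longrightarrow>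
        \<comment> \<open>the integrals converge\<close>
        (\<forall>t\<in>I. \<forall>x. integrable lborel (\<lambda>v::real^3. f (t, x, v))) \<longrightarrow>
        (\<forall>t\<in>I. set_integrable lborel {0..} (\<lambda>p. p^2 * F t p)) \<longrightarrow>
        \<comment> \<open>differentiation under the integral sign (locally uniform integrable majorant)\<close>
        (\<forall>K. compact K \<and> K \<subseteq> I \<longrightarrow>
            (\<exists>g. set_integrable lborel {0<..} g \<and>
                 (\<forall>t\<in>K. \<forall>p>0. \<bar>p^2 * dt F t p\<bar> \<le> g p))) \<longrightarrow>
        \<comment> \<open>no boundary term at infinity in the integration by parts\<close>
        (\<forall>t\<in>I. ((\<lambda>p. p^2 * sqrt (m^2 * (a t)^2 + p^2) * dp F t p) \<longlongrightarrow> 0) at_top) \<longrightarrow>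
        (\<forall>t\<in>I. \<forall>x i. Jsp a m f i t x = 0) \<and>
        (\<forall>t\<in>I. \<forall>x. (a t)^3 * J0 a m f t x
             = 4 * pi * set_lebesgue_integral lborel {0..} (\<lambda>p. p^2 * F t p)) \<and>
        (\<exists>C. \<forall>t\<in>I. 4 * pi * set_lebesgue_integral lborel {0..} (\<lambda>p. p^2 * F t p) = C))"
  proof -
  have a_diff: "\<forall>t\<in>I. (a has_real_derivative deriv a t) (at t)"
    using Cinf_diff[OF a_smooth] DERIV_deriv_iff_real_differentiable by blast
  have P1: "\<forall>f. Cinf_on (UmM I) f \<longrightarrow>
        (invariant I f \<longleftrightarrow>
          (\<exists>F. \<forall>z\<in>UmM I. f z = F (fst z) (pmom a (fst z) (snd (snd z)))))"
  proof (intro allI impI iffI)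
    fix f :: "pt \<Rightarrow> real" assume sm: "Cinf_on (UmM I) f"
    { assume "invariant I f"
      thus "\<exists>F. \<forall>z\<in>UmM I. f z = F (fst z) (pmom a (fst z) (snd (snd z)))"
        by (rule part1_fwd[OF sm a_pos]) }
    { assume "\<exists>F. \<forall>z\<in>UmM I. f z = F (fst z) (pmom a (fst z) (snd (snd z)))"
      then obtain F where Fr: "\<forall>z\<in>UmM I. f z = F (fst z) (pmom a (fst z) (snd (snd z)))" by blast
      show "invariant I f" by (rule part1_bwd[OF Setup_from_F[OF I_open a_pos a_diff sm Fr]]) }
  qed
  have P2: "\<forall>f F. Cinf_on (UmM I) f \<longrightarrow>
        (\<forall>z\<in>UmM I. f z = F (fst z) (pmom a (fst z) (snd (snd z)))) \<longrightarrow>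
        (\<forall>z\<in>UmM I. snd (snd z) \<noteq> 0 \<longrightarrow>
            (FP a m \<sigma> f z = 0 \<longleftrightarrow> FPred a m \<sigma> F (fst z) (pmom a (fst z) (snd (snd z)))))"
  proof (intro allI impI ballI)
    fix f :: "pt \<Rightarrow> real" and F :: "real \<Rightarrow> real \<Rightarrow> real" and z :: pt
    assume sm: "Cinf_on (UmM I) f" and Fr: "\<forall>z\<in>UmM I. f z = F (fst z) (pmom a (fst z) (snd (snd z)))"
      and z: "z \<in> UmM I" and nz: "snd (snd z) \<noteq> 0"
    interpret SetupF I a f F by (rule Setup_from_F[OF I_open a_pos a_diff sm Fr])
    obtain t x v where zz: "z = (t, x, v)" by (cases z) auto
    have t: "t \<in> I" using z zz by (simp add: UmM_def)
    have v: "v \<noteq> 0" using nz zz by simp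
    show "FP a m \<sigma> f z = 0 \<longleftrightarrow> FPred a m \<sigma> F (fst z) (pmom a (fst z) (snd (snd z)))"
      unfolding zz using part2[OF t v m_pos] by simp
  qed
  have P3: "\<forall>f F. Cinf_on (UmM I) f \<longrightarrow>
        (\<forall>z\<in>UmM I. f z = F (fst z) (pmom a (fst z) (snd (snd z)))) \<longrightarrow>
        (\<forall>t\<in>I. \<forall>p>0. FPred a m \<sigma> F t p) \<longrightarrow>
        (\<forall>t\<in>I. \<forall>x. integrable lborel (\<lambda>v::real^3. f (t, x, v))) \<longrightarrow>
        (\<forall>t\<in>I. set_integrable lborel {0..} (\<lambda>p. p^2 * F t p)) \<longrightarrow>
        (\<forall>K. compact K \<and> K \<subseteq> I \<longrightarrow>
            (\<exists>g. set_integrable lborel {0<..} g \<and>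
                 (\<forall>t\<in>K. \<forall>p>0. \<bar>p^2 * dt F t p\<bar> \<le> g p))) \<longrightarrow>
        (\<forall>t\<in>I. ((\<lambda>p. p^2 * sqrt (m^2 * (a t)^2 + p^2) * dp F t p) \<longlongrightarrow> 0) at_top) \<longrightarrow>
        (\<forall>t\<in>I. \<forall>x i. Jsp a m f i t x = 0) \<and>
        (\<forall>t\<in>I. \<forall>x. (a t)^3 * J0 a m f t x
             = 4 * pi * set_lebesgue_integral lborel {0..} (\<lambda>p. p^2 * F t p)) \<and>
        (\<exists>C. \<forall>t\<in>I. 4 * pi * set_lebesgue_integral lborel {0..} (\<lambda>p. p^2 * F t p) = C)"
  proof (intro allI impI)
    fix f :: "pt \<Rightarrow> real" and F :: "real \<Rightarrow> real \<Rightarrow> real"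
    assume sm: "Cinf_on (UmM I) f" and Fr: "\<forall>z\<in>UmM I. f z = F (fst z) (pmom a (fst z) (snd (snd z)))"
      and FPr: "\<forall>t\<in>I. \<forall>p>0. FPred a m \<sigma> F t p"
      and intf: "\<forall>t\<in>I. \<forall>x. integrable lborel (\<lambda>v::real^3. f (t, x, v))"
      and intF: "\<forall>t\<in>I. set_integrable lborel {0..} (\<lambda>p. p^2 * F t p)"
      and maj: "\<forall>K. compact K \<and> K \<subseteq> I \<longrightarrow>
            (\<exists>g. set_integrable lborel {0<..} g \<and>
                 (\<forall>t\<in>K. \<forall>p>0. \<bar>p^2 * dt F t p\<bar> \<le> g p))"
      and bdry: "\<forall>t\<in>I. ((\<lambda>p. p^2 * sqrt (m^2 * (a t)^2 + p^2) * dp F t p) \<longlongrightarrow> 0) at_top"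
    have S: "SetupF I a f F" by (rule Setup_from_F[OF I_open a_pos a_diff sm Fr])
    interpret Part3 I a f F m \<sigma>
      by (rule Part3.intro[OF S], unfold_locales) (use m_pos sigma_pos I_int FPr intF maj bdry in auto)
    show "(\<forall>t\<in>I. \<forall>x i. Jsp a m f i t x = 0) \<and>
        (\<forall>t\<in>I. \<forall>x. (a t)^3 * J0 a m f t x
             = 4 * pi * set_lebesgue_integral lborel {0..} (\<lambda>p. p^2 * F t p)) \<and>
        (\<exists>C. \<forall>t\<in>I. 4 * pi * set_lebesgue_integral lborel {0..} (\<lambda>p. p^2 * F t p) = C)"
      using Jsp_zero J0_formula C_const by blast
  qed
  show ?thesis using P1 P2 P3 by blast
qed

end
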